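(* Let $g(x,y)=\sum_{i,j=-\infty}^{\infty}c(i,j)x^iy^j$ be a nonzero bilateral formal series. Then $g\perp g$ if and only if there exist integers $m_0,k_0$ with $c(m_0,k_0)\neq0$ such that for all integers $i,j$, $$c(m_0,k_0)c(i,j)-c(m_0,i)c(k_0,j)+c(m_0,j)c(k_0,i)=0.$$
   Context: A bilateral formal series in $x,y$ is a formal expression $\sum_{i,j\in\mathbb{Z}}c(i,j)x^iy^j$ with complex coefficients. For two such series $f,g$, the expression $g(u,v)f(z,w)-g(u,w)f(z,v)+g(v,w)f(z,u)$ is a well-defined formal series in four independent variables $u,v,w,z$. One writes $f\perp g$ if this expression is identically zero. *)

theory Defs
  imports Complex_Main
begin

text \<open>A bilateral formal series in two variables x,y is represented by its coefficient
  function c, i.e. the series sum over i,j in Z of c(i,j) x^i y^j.\<close>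
type_synonym bseries2 = "int \<Rightarrow> int \<Rightarrow> complex"

text \<open>A formal series in the four variables u,v,w,z, represented by its coefficient function:
  F a b c d is the coefficient of u^a v^b w^c z^d.\<close>
type_synonym bseries4 = "int \<Rightarrow> int \<Rightarrow> int \<Rightarrow> int \<Rightarrow> complex"

text \<open>Products of two series in disjoint pairs of variables (each coefficient is a single
  product of coefficients, so these are well defined).\<close>

definition prod_uv_zw :: "bseries2 \<Rightarrow> bseries2 \<Rightarrow> bseries4" where
  "prod_uv_zw g f = (\<lambda>a b c d. g a b * f d c)"

definition prod_uw_zv :: "bseries2 \<Rightarrow> bseries2 \<Rightarrow> bseries4" where
  "prod_uw_zv g f = (\<lambda>a b c d. g a c * f d b)"

definition prod_vw_zu :: "bseries2 \<Rightarrow> bseries2 \<Rightarrow> bseries4" where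
  "prod_vw_zu g f = (\<lambda>a b c d. g b c * f d a)"

definition perp :: "bseries2 \<Rightarrow> bseries2 \<Rightarrow> bool" where
  "perp f g \<longleftrightarrow>
     (\<forall>a b c d. prod_uv_zw g f a b c d - prod_uw_zv g f a b c d + prod_vw_zu g f a b c d = 0)"

end

theory Submission
  imports Defs
begin

theorem lemma2p3:
  fixes c :: bseries2
  assumes "c \<noteq> (\<lambda>i j. 0)"
  shows "perp c c \<longleftrightarrow>
    (\<exists>m0 k0. c m0 k0 \<noteq> 0 \<and>
       (\<forall>i j. c m0 k0 * c i j - c m0 i * c k0 j + c m0 j * c k0 i = 0))"
proof
  assume P: "perp c c"
  have E: "\<And>a b x d. c a b * c d x - c a x * c d b + c b x * c d a = 0"
    using P unfolding perp_def prod_uv_zw_def prod_uw_zv_def prod_vw_zu_def by blast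
  obtain m0 k0 where nz: "c m0 k0 \<noteq> 0" using assms by blast
  have anti: "\<And>b. c k0 b = - c b k0"
  proof -
    fix b
    have "c k0 k0 * c m0 k0 = 0" using E[where a=k0 and b=k0 and x=k0 and d=m0] by simp
    hence d0: "c k0 k0 = 0" using nz by simp
    have "(c k0 b + c b k0) * c m0 k0 = 0" using E[where a=k0 and b=b and x=k0 and d=m0] d0 by (simp add: algebra_simps)
    thus "c k0 b = - c b k0" using nz by (simp add: add_eq_0_iff)
  qed
  show "\<exists>m0 k0. c m0 k0 \<noteq> 0 \<and>
       (\<forall>i j. c m0 k0 * c i j - c m0 i * c k0 j + c m0 j * c k0 i = 0)"
  proof (intro exI conjI allI)
    show "c m0 k0 \<noteq> 0" by (rule nz)
    fix i j
    have "c i j * c m0 k0 - c i k0 * c m0 j + c j k0 * c m0 i = 0" using E[where a=i and b=j and x=k0 and d=m0] .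
    thus "c m0 k0 * c i j - c m0 i * c k0 j + c m0 j * c k0 i = 0"
      using anti[of i] anti[of j] by (simp add: algebra_simps)
  qed
next
  assume "\<exists>m0 k0. c m0 k0 \<noteq> 0 \<and>
       (\<forall>i j. c m0 k0 * c i j - c m0 i * c k0 j + c m0 j * c k0 i = 0)"
  then obtain m0 k0 where nz: "c m0 k0 \<noteq> 0"
    and H: "\<And>i j. c m0 k0 * c i j - c m0 i * c k0 j + c m0 j * c k0 i = 0" by blast
  define l where "l = c m0 k0"
  define p where "p = c m0"
  define q where "q = c k0"
  have l0: "l \<noteq> 0" using nz l_def by simp
  have key: "\<And>i j. c i j = (p i * q j - p j * q i) / l"
    using H l0 unfolding l_def p_def q_def by (simp add: field_simps algebra_simps eq_neg_iff_add_eq_0)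
  show "perp c c"
    unfolding perp_def prod_uv_zw_def prod_uw_zv_def prod_vw_zu_def
  proof (intro allI)
    fix a b x d
    show "c a b * c d x - c a x * c d b + c b x * c d a = 0"
      unfolding key using l0 by (simp add: field_simps)
  qed
qed

end
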